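(* For all $n\ge0$, $$r_n=2^n+\sum_{k=1}^{n-1}2^k\,c(n,k),$$ where $c(n,k)$ denotes the number of Young diagrams fitting in the staircase shape $(n,n-1,\dots,1)$ that have exactly $k$ corners $(i,j)$ with $i+j<n+1$.
   Context: The (large) Schröder numbers are defined by $r_0=1$ and $r_n=r_{n-1}+\sum_{i=0}^{n-1}r_ir_{n-1-i}$ for $n\ge1$. Young diagrams are in English notation: the diagram of a partition $\lambda$ is the set of cells $(i,j)$ with $1\le j\le\lambda_i$; it fits in $(n,n-1,\dots,1)$ if $\lambda_i\le n+1-i$ for all $i$. A corner is a cell $(i,j)$ of the diagram such that neither $(i+1,j)$ nor $(i,j+1)$ belongs to the diagram. (For $n=0$ and $n=1$ the sum is empty.) *)

theory Defs
  imports Main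
begin

fun schroeder :: "nat \<Rightarrow> nat" where
  "schroeder 0 = 1"
| "schroeder (Suc m) = schroeder m + (\<Sum>i\<le>m. schroeder i * schroeder (m - i))"

text \<open>A partition is a list of positive, weakly decreasing parts; lam ! (i-1) is the
  i-th part lambda_i (rows indexed from 1).\<close>
definition is_partition :: "nat list \<Rightarrow> bool" where
  "is_partition lam \<longleftrightarrow> sorted_wrt (\<ge>) lam \<and> (\<forall>x\<in>set lam. 0 < x)"

definition young_diagram :: "nat list \<Rightarrow> (nat \<times> nat) set" where
  "young_diagram lam = {(i, j). 1 \<le> i \<and> i \<le> length lam \<and> 1 \<le> j \<and> j \<le> lam ! (i - 1)}"

definition fits_staircase :: "nat \<Rightarrow> nat list \<Rightarrow> bool" where
  "fits_staircase n lam \<longleftrightarrow> is_partition lam \<and>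
     (\<forall>i. 1 \<le> i \<and> i \<le> length lam \<longrightarrow> int (lam ! (i - 1)) \<le> int n + 1 - int i)"

definition corners :: "nat list \<Rightarrow> (nat \<times> nat) set" where
  "corners lam = {(i, j) \<in> young_diagram lam.
      (i + 1, j) \<notin> young_diagram lam \<and> (i, j + 1) \<notin> young_diagram lam}"

definition c_count :: "nat \<Rightarrow> nat \<Rightarrow> nat" where
  "c_count n k = card {lam. fits_staircase n lam \<and>
      card {(i, j) \<in> corners lam. i + j < n + 1} = k}"

end

theory Submission imports Defs begin

definition L :: "nat \<Rightarrow> nat list set" where "L n = {lam. fits_staircase n lam}"
definition ic :: "nat \<Rightarrow> nat list \<Rightarrow> nat" where
  "ic n lam = card {(i, j) \<in> corners lam. i + j < n + 1}"
definition rows :: "nat \<Rightarrow> nat list \<Rightarrow> nat set" where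
  "rows n lam = {i. 1 \<le> i \<and> i \<le> length lam \<and> (i < length lam \<longrightarrow> lam!i < lam!(i-1))
      \<and> i + lam!(i-1) < n+1}"

lemma corners_char:
  assumes "\<forall>x\<in>set lam. 0 < x"
  shows "(i,j) \<in> corners lam \<longleftrightarrow> 1 \<le> i \<and> i \<le> length lam \<and> j = lam!(i-1)
            \<and> (i < length lam \<longrightarrow> lam!i < lam!(i-1))"
proof -
  have pos: "1 \<le> i \<Longrightarrow> i \<le> length lam \<Longrightarrow> 0 < lam!(i-1)"
    using assms nth_mem[of "i-1" lam] by auto
  show ?thesis unfolding corners_def young_diagram_def using pos
    by (auto simp: not_le Suc_le_eq)
qed

lemma ic_rows:
  assumes "\<forall>x\<in>set lam. 0 < x"
  shows "ic n lam = card (rows n lam)"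
proof -
  have "{(i, j) \<in> corners lam. i + j < n + 1} = (\<lambda>i. (i, lam!(i-1))) ` rows n lam"
    using corners_char[OF assms] unfolding rows_def by auto
  moreover have "inj_on (\<lambda>i. (i, lam!(i-1))) (rows n lam)" by (auto simp: inj_on_def)
  ultimately show ?thesis unfolding ic_def by (simp add: card_image)
qed

lemma finite_rows: "finite (rows n lam)"
  by (rule finite_subset[of _ "{1..length lam}"]) (auto simp: rows_def)

lemma rows_Cons:
  "rows (Suc m) (a#mu) = (if a < Suc m \<and> (mu = [] \<or> hd mu < a) then {1} else {}) \<union> Suc ` rows m mu"
proof (rule set_eqI)
  fix i
  show "i \<in> rows (Suc m) (a#mu) \<longleftrightarrow> i \<in> (if a < Suc m \<and> (mu = [] \<or> hd mu < a) then {1} else {}) \<union> Suc ` rows m mu"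
  proof (cases i)
    case 0 then show ?thesis by (auto simp: rows_def)
  next
    case (Suc k)
    show ?thesis
    proof (cases k)
      case 0
      have "0 \<notin> rows m mu" by (auto simp: rows_def)
      then show ?thesis using Suc 0 by (cases mu) (auto simp: rows_def)
    next
      case (Suc l)
      have "i \<in> rows (Suc m) (a#mu) \<longleftrightarrow> k \<in> rows m mu"
        using \<open>i = Suc k\<close> Suc by (auto simp: rows_def)
      then show ?thesis using \<open>i = Suc k\<close> Suc by auto
    qed
  qed
qed

lemma card_rows_Cons:
  "card (rows (Suc m) (a#mu)) = (if a < Suc m \<and> (mu = [] \<or> hd mu < a) then 1 else 0) + card (rows m mu)"
proof -
  have "0 \<notin> rows m mu" by (auto simp: rows_def)
  then have d: "1 \<notin> Suc ` rows m mu" by auto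
  have c: "card (Suc ` rows m mu) = card (rows m mu)" by (simp add: card_image)
  show ?thesis unfolding rows_Cons using d c finite_rows[of m mu]
    by (auto simp: card_insert_if)
qed

lemma fits_pos: "fits_staircase n lam \<Longrightarrow> \<forall>x\<in>set lam. 0 < x"
  by (simp add: fits_staircase_def is_partition_def)

lemma ic_Cons:
  assumes "fits_staircase (Suc m) (a#mu)"
  shows "ic (Suc m) (a#mu) = (if a < Suc m \<and> (mu = [] \<or> hd mu < a) then 1 else 0) + ic m mu"
proof -
  have p: "\<forall>x\<in>set (a#mu). 0 < x" using fits_pos[OF assms] .
  then have p2: "\<forall>x\<in>set mu. 0 < x" by simp
  show ?thesis using ic_rows[OF p] ic_rows[OF p2] card_rows_Cons by simp
qed

lemma fits_Cons:
  "fits_staircase (Suc m) (a#mu) \<longleftrightarrow> fits_staircase m mu \<and> 0 < a \<and> a \<le> Suc m \<and> (mu = [] \<or> hd mu \<le> a)"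
proof -
  have part: "is_partition (a#mu) \<longleftrightarrow> is_partition mu \<and> 0 < a \<and> (mu = [] \<or> hd mu \<le> a)"
  proof (cases mu)
    case Nil then show ?thesis by (auto simp: is_partition_def)
  next
    case (Cons h t)
    show ?thesis unfolding is_partition_def Cons by auto
  qed
  have st: "(\<forall>i. 1 \<le> i \<and> i \<le> length (a#mu) \<longrightarrow> int ((a#mu) ! (i - 1)) \<le> int (Suc m) + 1 - int i)
     \<longleftrightarrow> a \<le> Suc m \<and> (\<forall>i. 1 \<le> i \<and> i \<le> length mu \<longrightarrow> int (mu ! (i - 1)) \<le> int m + 1 - int i)"
    (is "?A \<longleftrightarrow> ?B")
  proof
    assume A: ?A
    have "a \<le> Suc m" using A[rule_format, of 1] by simp
    moreover have "int (mu ! (i - 1)) \<le> int m + 1 - int i" if "1 \<le> i" "i \<le> length mu" for i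
      using A[rule_format, of "Suc i"] that by (cases i) auto
    ultimately show ?B by blast
  next
    assume B: ?B
    show ?A
    proof (intro allI impI)
      fix i assume i: "1 \<le> i \<and> i \<le> length (a#mu)"
      show "int ((a#mu) ! (i - 1)) \<le> int (Suc m) + 1 - int i"
      proof (cases "i = 1")
        case True then show ?thesis using B by simp
      next
        case False
        then obtain k where k: "i = Suc k" "1 \<le> k" using i by (cases i) auto
        then show ?thesis using B[THEN conjunct2, rule_format, of k] i by (cases k) auto
      qed
    qed
  qed
  show ?thesis unfolding fits_staircase_def using part st by auto
qed

lemma fits_hd: "fits_staircase n lam \<Longrightarrow> lam \<noteq> [] \<Longrightarrow> hd lam \<le> n \<and> 0 < hd lam"
  apply (cases lam)
   apply simp
  apply (auto simp: fits_staircase_def is_partition_def)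
  done

lemma fits_bound: "fits_staircase n lam \<Longrightarrow> set lam \<subseteq> {0..n} \<and> length lam \<le> n"
proof -
  assume f: "fits_staircase n lam"
  have b: "lam!k \<le> n + 1 - Suc k \<and> 0 < lam!k" if "k < length lam" for k
  proof -
    have "int (lam ! (Suc k - 1)) \<le> int n + 1 - int (Suc k)"
      using f that unfolding fits_staircase_def by (metis One_nat_def Suc_le_eq le_add1 plus_1_eq_Suc)
    moreover have "0 < lam!k" using fits_pos[OF f] that by simp
    ultimately show ?thesis by simp
  qed
  have "set lam \<subseteq> {0..n}" using b by (auto simp: in_set_conv_nth) (meson b diff_le_self le_trans)
  moreover have "length lam \<le> n"
  proof (cases "lam = []")
    case False
    then have "length lam - 1 < length lam" by simp
    from b[OF this] show ?thesis by linarith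
  qed simp
  ultimately show ?thesis by blast
qed

lemma finite_L: "finite (L n)"
  by (rule finite_subset[OF _ finite_lists_length_le[of "{0..n}" n]])
     (use fits_bound in \<open>auto simp: L_def\<close>)

lemma nil_L: "[] \<in> L n" by (simp add: L_def fits_staircase_def is_partition_def)

lemma ic_nil: "ic n [] = 0"
proof -
  have "{(i, j) \<in> corners []. i + j < n + 1} = {}" by (auto simp: corners_def young_diagram_def)
  then show ?thesis unfolding ic_def by (metis card.empty)
qed


definition Wx :: "nat \<Rightarrow> nat \<Rightarrow> nat \<Rightarrow> nat" where
  "Wx x n b = (\<Sum>lam\<in>{lam\<in>L n. lam = [] \<or> hd lam \<le> b}. x ^ ic n lam)"
definition Ex :: "nat \<Rightarrow> nat \<Rightarrow> nat \<Rightarrow> nat" where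
  "Ex x n a = (\<Sum>lam\<in>{lam\<in>L n. lam \<noteq> [] \<and> hd lam = a}. x ^ ic n lam)"

lemma W0: "Wx x n 0 = 1"
proof -
  have "{lam\<in>L n. lam = [] \<or> hd lam \<le> 0} = {[]}"
    using nil_L by (auto simp: L_def) (metis fits_hd less_irrefl)
  then show ?thesis by (simp add: Wx_def ic_nil)
qed

lemma W_Suc: "Wx x n (Suc c) = Wx x n c + Ex x n (Suc c)"
proof -
  have "{lam\<in>L n. lam = [] \<or> hd lam \<le> Suc c} = {lam\<in>L n. lam = [] \<or> hd lam \<le> c} \<union> {lam\<in>L n. lam \<noteq> [] \<and> hd lam = Suc c}"
    by auto
  moreover have "finite {lam\<in>L n. lam = [] \<or> hd lam \<le> c}" "finite {lam\<in>L n. lam \<noteq> [] \<and> hd lam = Suc c}"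
    using finite_L by auto
  ultimately show ?thesis unfolding Wx_def Ex_def
    by (subst sum.union_disjoint[symmetric]) auto
qed

lemma E_big: "n < a \<Longrightarrow> Ex x n a = 0"
proof -
  assume "n < a"
  then have e: "{lam\<in>L n. lam \<noteq> [] \<and> hd lam = a} = {}" using fits_hd by (fastforce simp: L_def)
  show ?thesis unfolding Ex_def e by simp
qed

lemma W_all: "Wx x n n = (\<Sum>lam\<in>L n. x ^ ic n lam)"
proof -
  have "{lam\<in>L n. lam = [] \<or> hd lam \<le> n} = L n" using fits_hd by (auto simp: L_def)
  then show ?thesis by (simp add: Wx_def)
qed

lemma E_Cons:
  assumes "c \<le> m"
  shows "Ex x (Suc m) (Suc c) = (if c < m then x * Wx x m c else Wx x m c) + Ex x m (Suc c)"
proof -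
  let ?M = "{mu\<in>L m. mu = [] \<or> hd mu \<le> Suc c}"
  let ?M1 = "{mu\<in>L m. mu = [] \<or> hd mu \<le> c}"
  let ?M2 = "{mu\<in>L m. mu \<noteq> [] \<and> hd mu = Suc c}"
  have S: "{lam\<in>L (Suc m). lam \<noteq> [] \<and> hd lam = Suc c} = (#) (Suc c) ` ?M"
  proof (rule set_eqI)
    fix lam
    show "lam \<in> {lam\<in>L (Suc m). lam \<noteq> [] \<and> hd lam = Suc c} \<longleftrightarrow> lam \<in> (#) (Suc c) ` ?M"
      using assms by (cases lam) (auto simp: L_def fits_Cons)
  qed
  have "Ex x (Suc m) (Suc c) = (\<Sum>mu\<in>?M. x ^ ic (Suc m) (Suc c # mu))"
    unfolding Ex_def S by (subst sum.reindex) (auto simp: inj_on_def)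
  also have "\<dots> = (\<Sum>mu\<in>?M. x ^ ((if c < m \<and> (mu = [] \<or> hd mu \<le> c) then 1 else 0) + ic m mu))"
  proof (rule sum.cong)
    fix mu assume "mu \<in> ?M"
    then have "fits_staircase (Suc m) (Suc c # mu)" using assms by (auto simp: L_def fits_Cons)
    moreover have cond: "(Suc c < Suc m \<and> (mu = [] \<or> hd mu < Suc c)) = (c < m \<and> (mu = [] \<or> hd mu \<le> c))" by auto
    ultimately show "x ^ ic (Suc m) (Suc c # mu) = x ^ ((if c < m \<and> (mu = [] \<or> hd mu \<le> c) then 1 else 0) + ic m mu)"
      by (simp only: ic_Cons cond)
  qed simp
  also have "?M = ?M1 \<union> ?M2" by auto
  also have "(\<Sum>mu\<in>?M1 \<union> ?M2. x ^ ((if c < m \<and> (mu = [] \<or> hd mu \<le> c) then 1 else 0) + ic m mu))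
      = (\<Sum>mu\<in>?M1. x ^ ((if c < m \<and> (mu = [] \<or> hd mu \<le> c) then 1 else 0) + ic m mu))
      + (\<Sum>mu\<in>?M2. x ^ ((if c < m \<and> (mu = [] \<or> hd mu \<le> c) then 1 else 0) + ic m mu))"
    by (rule sum.union_disjoint) (use finite_L in auto)
  also have "(\<Sum>mu\<in>?M1. x ^ ((if c < m \<and> (mu = [] \<or> hd mu \<le> c) then 1 else 0) + ic m mu))
      = (if c < m then x * Wx x m c else Wx x m c)"
    unfolding Wx_def by (auto simp: sum_distrib_left intro!: sum.cong)
  also have "(\<Sum>mu\<in>?M2. x ^ ((if c < m \<and> (mu = [] \<or> hd mu \<le> c) then 1 else 0) + ic m mu))
      = Ex x m (Suc c)"
    unfolding Ex_def by (auto intro!: sum.cong)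
  finally show ?thesis .
qed


abbreviation W :: "nat \<Rightarrow> nat \<Rightarrow> nat" where "W \<equiv> Wx 2"

lemma R1: "c < m \<Longrightarrow> W (Suc m) (Suc c) = W (Suc m) c + W m (Suc c) + W m c"
  using W_Suc[of 2 "Suc m" c] E_Cons[of c m 2] W_Suc[of 2 m c] by simp

lemma R2: "W (Suc m) (Suc m) = W (Suc m) m + W m m"
  using W_Suc[of 2 "Suc m" m] E_Cons[of m m 2] E_big[of m "Suc m" 2] by simp

lemma key: "b < n \<Longrightarrow> W n b = (\<Sum>k\<le>b. W k k * W (n - 1 - k) (b - k))"
proof (induction "n+b" arbitrary: n b rule: less_induct)
  case less
  then obtain m where n: "n = Suc m" by (cases n) auto
  show ?case
  proof (cases b)
    case 0 then show ?thesis by (simp add: W0)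
  next
    case (Suc c)
    have cm: "c < m" using less.prems n Suc by simp
    have IH1: "W n c = (\<Sum>k\<le>c. W k k * W (m - k) (c - k))"
      using less(1)[of n c] less.prems Suc n by simp
    have IH3: "W m c = (\<Sum>k\<le>c. W k k * W (m - 1 - k) (c - k))"
      using less(1)[of m c] cm n Suc by simp
    show ?thesis
    proof (cases "Suc c < m")
      case True
      have IH2: "W m (Suc c) = (\<Sum>k\<le>Suc c. W k k * W (m - 1 - k) (Suc c - k))"
        using less(1)[of m "Suc c"] True n Suc by simp
      have each: "W (m-k) (Suc c-k) = W (m-k) (c-k) + W (m-1-k) (Suc c - k) + W (m-1-k) (c-k)"
        if "k \<le> c" for k
      proof -
        have e1: "m - k = Suc (m-1-k)" "Suc c - k = Suc (c - k)" using that True by auto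
        have "c - k < m - 1 - k" using that True by auto
        from R1[OF this] show ?thesis unfolding e1 by simp
      qed
      have A: "(\<Sum>k\<le>b. W k k * W (n - 1 - k) (b - k))
          = (\<Sum>k\<le>c. W k k * W (m-k) (Suc c-k)) + W (Suc c) (Suc c)"
        using n Suc by (simp add: W0)
      have B: "(\<Sum>k\<le>c. W k k * W (m-k) (Suc c-k))
          = (\<Sum>k\<le>c. W k k * W (m-k) (c-k)) + (\<Sum>k\<le>c. W k k * W (m-1-k) (Suc c - k))
            + (\<Sum>k\<le>c. W k k * W (m-1-k) (c-k))"
        by (simp add: each algebra_simps sum.distrib)
      have C: "(\<Sum>k\<le>c. W k k * W (m-1-k) (Suc c - k)) + W (Suc c) (Suc c) = W m (Suc c)"
        using IH2 by (simp add: W0)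
      have D: "W n b = W n c + W m (Suc c) + W m c" using R1[OF cm] n Suc by simp
      show ?thesis using A B C D IH1 IH3 by linarith
    next
      case False
      then have m: "m = Suc c" using cm by simp
      have each: "W (m-k) (m-k) = W (m-k) (c-k) + W (c-k) (c-k)" if "k \<le> c" for k
      proof -
        have e1: "m - k = Suc (c-k)" using that m by auto
        show ?thesis unfolding e1 by (rule R2)
      qed
      have "(\<Sum>k\<le>b. W k k * W (n - 1 - k) (b - k))
          = (\<Sum>k\<le>c. W k k * W (m-k) (m-k)) + W m m"
        using n Suc m by (simp add: W0)
      also have "(\<Sum>k\<le>c. W k k * W (m-k) (m-k))
          = (\<Sum>k\<le>c. W k k * W (m-k) (c-k)) + (\<Sum>k\<le>c. W k k * W (c-k) (c-k))"
        by (simp add: each algebra_simps sum.distrib)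
      also have "(\<Sum>k\<le>c. W k k * W (c-k) (c-k)) = W m c" using IH3 m by simp
      finally show ?thesis using IH1 R1[OF cm] n Suc m by simp
    qed
  qed
qed

lemma W_diag: "W n n = schroeder n"
proof (induction n rule: less_induct)
  case (less n)
  show ?case
  proof (cases n)
    case 0 then show ?thesis by (simp add: W0)
  next
    case (Suc m)
    have "W n n = W (Suc m) m + W m m" using R2 Suc by simp
    also have "W (Suc m) m = (\<Sum>k\<le>m. W k k * W (m - k) (m - k))" using key[of m "Suc m"] by simp
    also have "\<dots> = (\<Sum>k\<le>m. schroeder k * schroeder (m - k))"
      using less Suc by (intro sum.cong) auto
    finally show ?thesis using less Suc by simp
  qed
qed

abbreviation Z :: "nat \<Rightarrow> nat \<Rightarrow> nat" where "Z \<equiv> Wx 0"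

lemma Z_step: "b \<le> m \<Longrightarrow> Z (Suc m) b = Z m b"
proof (induction b)
  case 0 then show ?case by (simp add: W0)
next
  case (Suc c)
  then show ?case using W_Suc[of 0 "Suc m" c] E_Cons[of c m 0] W_Suc[of 0 m c] by simp
qed

lemma Z_diag: "Z n n = 2 ^ n"
proof (induction n)
  case 0 then show ?case by (simp add: W0)
next
  case (Suc m)
  have "Z (Suc m) (Suc m) = Z (Suc m) m + Ex 0 (Suc m) (Suc m)" by (rule W_Suc)
  also have "\<dots> = Z m m + Z m m" using Z_step[of m m] E_Cons[of m m 0] E_big[of m "Suc m" 0] by simp
  finally show ?case using Suc by simp
qed

lemma ic_le: assumes "lam \<in> L n" "1 \<le> n" shows "ic n lam \<le> n - 1"
proof -
  have f: "fits_staircase n lam" using assms by (simp add: L_def)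
  have len: "length lam \<le> n" using fits_bound[OF f] by simp
  have pos: "\<forall>x\<in>set lam. 0 < x" using fits_pos[OF f] .
  have "rows n lam \<subseteq> {1..n-1}"
  proof
    fix i assume i: "i \<in> rows n lam"
    then have "1 \<le> i" "i \<le> length lam" "i + lam!(i-1) < n+1" by (auto simp: rows_def)
    moreover have "0 < lam!(i-1)" using pos nth_mem[of "i-1" lam] \<open>1 \<le> i\<close> \<open>i \<le> length lam\<close> by auto
    ultimately show "i \<in> {1..n-1}" by auto
  qed
  then have "card (rows n lam) \<le> n - 1" using card_mono[of "{1..n-1}"] by fastforce
  then show ?thesis using ic_rows[OF pos] by simp
qed

lemma sum_group_ic: assumes "1 \<le> n"
  shows "(\<Sum>lam\<in>L n. x ^ ic n lam) = (\<Sum>k\<in>{0..n-1}. x ^ k * c_count n k)"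
proof -
  have "(\<Sum>lam\<in>L n. x ^ ic n lam) = (\<Sum>k\<in>{0..n-1}. \<Sum>lam\<in>{lam. lam \<in> L n \<and> ic n lam = k}. x ^ ic n lam)"
    by (rule sum.group[symmetric]) (use finite_L ic_le assms in auto)
  also have "\<dots> = (\<Sum>k\<in>{0..n-1}. x ^ k * c_count n k)"
  proof (rule sum.cong)
    fix k
    have "{lam. lam \<in> L n \<and> ic n lam = k} = {lam. fits_staircase n lam \<and>
      card {(i, j) \<in> corners lam. i + j < n + 1} = k}" by (auto simp: L_def ic_def)
    moreover have "(\<Sum>lam\<in>{lam. lam \<in> L n \<and> ic n lam = k}. x ^ ic n lam)
       = (\<Sum>lam\<in>{lam. lam \<in> L n \<and> ic n lam = k}. x ^ k)" by (rule sum.cong) auto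
    ultimately show "(\<Sum>lam\<in>{lam. lam \<in> L n \<and> ic n lam = k}. x ^ ic n lam) = x ^ k * c_count n k"
      unfolding c_count_def by (simp add: mult.commute)
  qed simp
  finally show ?thesis .
qed

lemma c0: "c_count n 0 = 2 ^ n"
proof -
  have "Z n n = (\<Sum>lam\<in>L n. 0 ^ ic n lam)" by (rule W_all)
  also have "\<dots> = card {lam \<in> L n. ic n lam = 0}"
    using finite_L[of n] by (simp add: power_0_left sum.If_cases Int_def)
  also have "{lam \<in> L n. ic n lam = 0} = {lam. fits_staircase n lam \<and>
      card {(i, j) \<in> corners lam. i + j < n + 1} = 0}" by (auto simp: L_def ic_def)
  finally show ?thesis using Z_diag unfolding c_count_def by simp
qed

theorem corollary2p10:
  fixes n :: nat
  shows "schroeder n = 2 ^ n + (\<Sum>k = 1..n - 1. 2 ^ k * c_count n k)"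
proof (cases n)
  case 0 then show ?thesis by simp
next
  case (Suc m)
  have "schroeder n = (\<Sum>lam\<in>L n. 2 ^ ic n lam)" using W_diag[of n] W_all[of 2 n] by simp
  also have "\<dots> = (\<Sum>k\<in>{0..n-1}. 2 ^ k * c_count n k)" using sum_group_ic Suc by simp
  also have "{0..n-1} = insert 0 {1..n-1}" by auto
  also have "(\<Sum>k\<in>insert 0 {1..n-1}. 2 ^ k * c_count n k) = c_count n 0 + (\<Sum>k = 1..n - 1. 2 ^ k * c_count n k)"
    by simp
  finally show ?thesis using c0 by simp
qed

end
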